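(* Let $\nu\ge1$, $d:\mathbb{Z}^\nu\to\mathbb{C}$ bounded, $J=J_0+D$ on $\ell^2(\mathbb{Z}^\nu)$, and $b\in\mathbb{R}$. Suppose that for some $j\in\{1,\dots,\nu\}$ one of the following holds: (i) $\sup\{k_j: k\in\mathbb{Z}^\nu,\ \Im(d(k))=b\}<\infty$; (ii) $\inf\{k_j: k\in\mathbb{Z}^\nu,\ \Im(d(k))=b\}>-\infty$. (Here $\sup\emptyset=-\infty$ and $\inf\emptyset=+\infty$.) Then $J$ has no boundary eigenvalue with imaginary part $b$.
   Context: $k_j$ denotes the $j$-th component of $k\in\mathbb{Z}^\nu$. $J_0$ is the discrete Laplacian on $\ell^2(\mathbb{Z}^\nu)$: $(J_0u)(k)=\sum_{l\in\mathbb{Z}^\nu:\|l\|_1=1}u(k+l)$, $\|l\|_1=\sum_j|l_j|$. $D$ is multiplication by $d$. The numerical range is $\operatorname{Num}(J)=\{\langle Ju,u\rangle:\|u\|=1\}$, and a boundary eigenvalue of $J$ is an eigenvalue of $J$ lying in the topological boundary of $\operatorname{Num}(J)$. *)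

theory Defs
  imports "HOL-Analysis.Analysis"
begin

text \<open>Lattice \<int>^\<nu> is modelled as int^'n for a finite index type 'n (so \<nu> = CARD('n) \<ge> 1).
  Sequences on the lattice are functions int^'n \<Rightarrow> complex.\<close>

definition ell2 :: "(int^'n::finite \<Rightarrow> complex) set" where
  "ell2 = {u. (\<lambda>k. (cmod (u k))^2) summable_on UNIV}"

definition l2norm :: "(int^'n::finite \<Rightarrow> complex) \<Rightarrow> real" where
  "l2norm u = sqrt (\<Sum>\<^sub>\<infinity>k. (cmod (u k))^2)"

definition l2inner :: "(int^'n::finite \<Rightarrow> complex) \<Rightarrow> (int^'n \<Rightarrow> complex) \<Rightarrow> complex" where
  "l2inner u v = (\<Sum>\<^sub>\<infinity>k. u k * cnj (v k))"

definition disc_laplacian :: "(int^'n::finite \<Rightarrow> complex) \<Rightarrow> int^'n \<Rightarrow> complex" where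
  "disc_laplacian u k = (\<Sum>l \<in> {l::int^'n. (\<Sum>i\<in>UNIV. \<bar>l $ i\<bar>) = 1}. u (k + l))"

definition jacobi_op :: "(int^'n::finite \<Rightarrow> complex) \<Rightarrow> (int^'n \<Rightarrow> complex) \<Rightarrow> int^'n \<Rightarrow> complex" where
  "jacobi_op d u k = disc_laplacian u k + d k * u k"

definition num_range :: "((int^'n::finite \<Rightarrow> complex) \<Rightarrow> (int^'n \<Rightarrow> complex)) \<Rightarrow> complex set" where
  "num_range T = {l2inner (T u) u | u. u \<in> ell2 \<and> l2norm u = 1}"

definition is_eigenvalue :: "((int^'n::finite \<Rightarrow> complex) \<Rightarrow> (int^'n \<Rightarrow> complex)) \<Rightarrow> complex \<Rightarrow> bool" where
  "is_eigenvalue T \<mu> = (\<exists>u\<in>ell2. (\<exists>k. u k \<noteq> 0) \<and> T u = (\<lambda>k. \<mu> * u k))"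

definition boundary_eigenvalue :: "((int^'n::finite \<Rightarrow> complex) \<Rightarrow> (int^'n \<Rightarrow> complex)) \<Rightarrow> complex \<Rightarrow> bool" where
  "boundary_eigenvalue T \<mu> = (is_eigenvalue T \<mu> \<and> \<mu> \<in> frontier (num_range T))"

end

theory Submission
  imports Defs
begin


definition nbs :: "(int^'n::finite) set" where
  "nbs = {l. (\<Sum>i\<in>UNIV. \<bar>l $ i\<bar>) = 1}"

lemma disc_lap_nbs: "disc_laplacian u k = (\<Sum>l\<in>nbs. u (k + l))"
  by (simp add: disc_laplacian_def nbs_def)

lemma nbs_coord_le: "l \<in> nbs \<Longrightarrow> \<bar>l $ i\<bar> \<le> 1"
proof -
  assume "l \<in> nbs"
  hence "(\<Sum>i\<in>UNIV. \<bar>l $ i\<bar>) = 1" by (simp add: nbs_def)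
  moreover have "\<bar>l $ i\<bar> \<le> (\<Sum>i\<in>UNIV. \<bar>l $ i\<bar>)"
    by (rule member_le_sum) auto
  ultimately show ?thesis by simp
qed

lemma finite_nbs: "finite (nbs :: (int^'n::finite) set)"
proof -
  have "nbs \<subseteq> vec_lambda ` (PiE (UNIV::'n set) (\<lambda>_. {-1..1::int}))"
  proof
    fix l :: "int^'n" assume l: "l \<in> nbs"
    have "(\<lambda>i. l $ i) \<in> PiE UNIV (\<lambda>_. {-1..1::int})"
      using nbs_coord_le[OF l] by (auto simp: abs_le_iff)
    moreover have "l = vec_lambda (\<lambda>i. l $ i)" by simp
    ultimately show "l \<in> vec_lambda ` (PiE (UNIV::'n set) (\<lambda>_. {-1..1::int}))" by blast
  qed
  moreover have "finite (vec_lambda ` (PiE (UNIV::'n set) (\<lambda>_. {-1..1::int})))"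
    by (intro finite_imageI finite_PiE) auto
  ultimately show ?thesis by (rule finite_subset)
qed

lemma nbs_uminus: "(-l) \<in> nbs \<longleftrightarrow> l \<in> nbs"
  by (simp add: nbs_def)

lemma zero_notin_nbs: "0 \<notin> nbs"
  by (simp add: nbs_def)

lemma nbs_sign:
  fixes l :: "int^'n::finite" and s :: int
  assumes l: "l \<in> nbs" and s: "s = 1 \<or> s = -1"
  shows "0 \<le> s * l $ j \<or> l = - (\<chi> i. if i = j then s else 0)"
proof (cases "0 \<le> s * l $ j")
  case True then show ?thesis by simp
next
  case False
  have lj: "\<bar>l $ j\<bar> \<le> 1" by (rule nbs_coord_le[OF l])
  have slj: "s * l $ j = -1" using False s lj by auto
  have aj: "\<bar>l $ j\<bar> = 1" using slj s by auto
  have sum1: "(\<Sum>i\<in>UNIV. \<bar>l $ i\<bar>) = 1" using l by (simp add: nbs_def)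
  have "(\<Sum>i\<in>UNIV. \<bar>l $ i\<bar>) = \<bar>l $ j\<bar> + (\<Sum>i\<in>UNIV-{j}. \<bar>l $ i\<bar>)"
    by (simp add: sum.remove)
  hence rest: "(\<Sum>i\<in>UNIV-{j}. \<bar>l $ i\<bar>) = 0" using sum1 aj by simp
  have "\<forall>i\<in>UNIV-{j}. \<bar>l $ i\<bar> = 0"
    using sum_nonneg_eq_0_iff[of "UNIV-{j}" "\<lambda>i. \<bar>l $ i\<bar>"] rest by simp
  hence "l = - (\<chi> i. if i = j then s else 0)"
    using slj s by (auto simp: vec_eq_iff)
  then show ?thesis by simp
qed

lemma support_zero:
  fixes u :: "int^'n::finite \<Rightarrow> complex" and s M :: int
  assumes eig: "jacobi_op d u = (\<lambda>k. \<mu> * u k)" and s: "s = 1 \<or> s = -1"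
    and bd: "\<forall>k. u k \<noteq> 0 \<longrightarrow> s * k $ j \<le> M"
  shows "u = (\<lambda>_. 0)"
proof (rule ccontr)
  assume "u \<noteq> (\<lambda>_. 0)"
  then obtain k0 where "u k0 \<noteq> 0" by auto
  from ex_has_least_nat[of "\<lambda>k. u k \<noteq> 0", OF this, where m="\<lambda>k. nat (M - s * k $ j)"]
  obtain k where uk: "u k \<noteq> 0" and kmin: "\<forall>q. u q \<noteq> 0 \<longrightarrow> nat (M - s * k $ j) \<le> nat (M - s * q $ j)"
    by blast
  have big: "u q = 0" if "s * q $ j > s * k $ j" for q
  proof (rule ccontr)
    assume "u q \<noteq> 0"
    with kmin have "nat (M - s * k $ j) \<le> nat (M - s * q $ j)" by blast
    moreover have "s * q $ j \<le> M" using bd \<open>u q \<noteq> 0\<close> by blast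
    ultimately show False using that by linarith
  qed
  define e :: "int^'n" where "e = (\<chi> i. if i = j then s else 0)"
  define p where "p = k + e"
  have ss: "s * s = 1" using s by auto
  have up: "u p = 0" by (rule big) (use s in \<open>auto simp: p_def e_def algebra_simps\<close>)
  have me: "-e \<in> nbs"
  proof -
    have "(\<Sum>i\<in>UNIV. \<bar>(-e) $ i\<bar>) = (\<Sum>i\<in>UNIV. if i = j then 1 else 0)"
      by (rule sum.cong) (use s in \<open>auto simp: e_def\<close>)
    thus ?thesis by (simp add: nbs_def)
  qed
  have "disc_laplacian u p = (\<Sum>l\<in>nbs. u (p + l))" by (rule disc_lap_nbs)
  also have "\<dots> = (\<Sum>l\<in>nbs. if l = -e then u k else 0)"
  proof (rule sum.cong)
    fix l :: "int^'n" assume l: "l \<in> nbs"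
    show "u (p + l) = (if l = -e then u k else 0)"
    proof (cases "l = -e")
      case True then show ?thesis by (simp add: p_def)
    next
      case False
      hence "0 \<le> s * l $ j" using nbs_sign[OF l s, of j] by (auto simp: e_def)
      hence "s * (p + l) $ j > s * k $ j" using ss by (simp add: p_def e_def algebra_simps)
      thus ?thesis using big False by simp
    qed
  qed simp
  also have "\<dots> = u k" using me by (simp add: sum.delta[OF finite_nbs])
  finally have "disc_laplacian u p = u k" .
  moreover have "jacobi_op d u p = \<mu> * u p" using eig by (simp add: fun_eq_iff)
  ultimately have "u k = 0" using up by (simp add: jacobi_op_def)
  with uk show False by simp
qed



lemma scalar_solve:
  fixes N n' :: real and c e :: complex
  assumes N: "N > 0" and c: "c \<noteq> 0"
  shows "\<exists>\<epsilon>>0. \<forall>z. cmod z < \<epsilon> \<longrightarrow> (\<exists>t. t * c + of_real ((cmod t)^2) * e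
            = z * of_real (N + (cmod t)^2 * n') \<and> N + (cmod t)^2 * n' > 0)"
proof -
  define K where "K = \<bar>n'\<bar> + cmod e + 1"
  define C where "C = cmod c"
  have K: "K > 0" "\<bar>n'\<bar> < K" "1 \<le> K" unfolding K_def using norm_ge_zero[of e] by linarith+
  have C: "C > 0" using c by (simp add: C_def)
  define \<epsilon> where "\<epsilon> = min 1 (min (C^2/(4*N*K)) (C * min 1 N/(2*N*K)))"
  have "\<epsilon> > 0" unfolding \<epsilon>_def using N K C by auto
  moreover have "\<exists>t. t * c + of_real ((cmod t)^2) * e
            = z * of_real (N + (cmod t)^2 * n') \<and> N + (cmod t)^2 * n' > 0" if z: "cmod z < \<epsilon>" for z
  proof -
    define x where "x = cmod z"
    have x0: "0 \<le> x" by (simp add: x_def)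
    have x1: "x \<le> 1" using z by (simp add: x_def \<epsilon>_def)
    have x2: "x \<le> C^2/(4*N*K)" using z by (simp add: x_def \<epsilon>_def)
    have x3: "x \<le> C * min 1 N/(2*N*K)" using z by (simp add: x_def \<epsilon>_def)
    have x3': "2 * x \<le> C * min 1 N/(N*K)"
    proof -
      have "2 * x \<le> 2 * (C * min 1 N/(2*N*K))" using x3 by linarith
      also have "\<dots> = C * min 1 N/(N*K)" using N K by (simp add: field_simps)
      finally show ?thesis .
    qed
    define W where "W = z * of_real n' - e"
    have W: "cmod W \<le> K"
    proof -
      have "cmod W \<le> cmod (z * of_real n') + cmod e" unfolding W_def by (rule norm_triangle_ineq4)
      also have "\<dots> = x * \<bar>n'\<bar> + cmod e" by (simp add: x_def norm_mult)
      also have "\<dots> \<le> 1 * \<bar>n'\<bar> + cmod e" using x1 by (intro add_right_mono mult_right_mono) auto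
      finally show ?thesis by (simp add: K_def)
    qed
    define \<phi> where "\<phi> r = cmod (z * of_real N + of_real (r^2) * W) / C - r" for r :: real
    define R where "R = 2 * x * N / C"
    have R0: "0 \<le> R" using x0 N C by (simp add: R_def)
    have phi0: "\<phi> 0 \<ge> 0" using N C by (simp add: \<phi>_def)
    have RK: "R * K \<le> min 1 N"
    proof -
      have "R * K = 2 * x * N * K / C" by (simp add: R_def)
      also have "\<dots> \<le> 2 * (C * min 1 N/(2*N*K)) * N * K / C"
        using x3' N K C by (intro divide_right_mono mult_right_mono) auto
      also have "\<dots> = min 1 N" using N K C by (simp add: field_simps)
      finally show ?thesis .
    qed
    have phiR: "\<phi> R \<le> 0"
    proof -
      have "cmod (z * of_real N + of_real (R^2) * W) \<le> x * N + R^2 * K"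
      proof -
        have "cmod (z * of_real N + of_real (R^2) * W) \<le> cmod (z * of_real N) + cmod (of_real (R^2) * W)"
          by (rule norm_triangle_ineq)
        also have "\<dots> = x * N + R^2 * cmod W" using N R0 by (simp add: x_def norm_mult norm_power)
        also have "\<dots> \<le> x * N + R^2 * K" using W by (intro add_left_mono mult_left_mono) auto
        finally show ?thesis .
      qed
      moreover have "R^2 * K \<le> x * N"
      proof -
        have "R^2 * K = 4 * x * N * (x * N * K) / C^2" by (simp add: R_def power2_eq_square field_simps)
        also have "\<dots> \<le> 4 * x * N * ((C^2/(4*N*K)) * N * K) / C^2"
          using x2 x0 N K C by (intro divide_right_mono mult_left_mono mult_right_mono) auto
        also have "\<dots> = x * N" using N K C by (simp add: field_simps)
        finally show ?thesis .
      qed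
      ultimately have "cmod (z * of_real N + of_real (R^2) * W) \<le> 2 * x * N" by linarith
      hence "cmod (z * of_real N + of_real (R^2) * W) / C \<le> R"
        using C by (simp add: R_def divide_right_mono)
      thus ?thesis by (simp add: \<phi>_def)
    qed
    have "continuous_on {0..R} \<phi>" unfolding \<phi>_def by (intro continuous_intros) (use C in auto)
    from IVT2'[of \<phi> R 0 0, OF phiR phi0 R0 this]
    obtain r where r: "0 \<le> r" "r \<le> R" "\<phi> r = 0" by blast
    have eq: "cmod (z * of_real N + of_real (r^2) * W) = r * C" using r(3) C by (simp add: \<phi>_def field_simps)
    define t where "t = (z * of_real N + of_real (r^2) * W) / c"
    have tr: "cmod t = r" using eq C r(1) by (simp add: t_def norm_divide C_def)
    have "t * c + of_real ((cmod t)^2) * e = z * of_real N + of_real (r^2) * W + of_real (r^2) * e"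
      using c tr by (simp add: t_def)
    also have "\<dots> = z * of_real (N + (cmod t)^2 * n')" by (simp add: W_def tr algebra_simps)
    finally have E: "t * c + of_real ((cmod t)^2) * e = z * of_real (N + (cmod t)^2 * n')" .
    have "r^2 * \<bar>n'\<bar> < N"
    proof -
      have "r * K \<le> R * K" by (rule mult_right_mono) (use r K in auto)
      hence rK1: "r * K \<le> 1" and rKN: "r * K \<le> N" using RK by auto
      have "r * 1 \<le> r * K" by (rule mult_left_mono) (use K r in auto)
      hence r1: "r \<le> 1" using rK1 by simp
      have "r * r \<le> r" by (rule mult_right_le_one_le) (use r r1 in auto)
      hence "r^2 * \<bar>n'\<bar> \<le> r * \<bar>n'\<bar>" unfolding power2_eq_square by (rule mult_right_mono) simp
      moreover have "r * \<bar>n'\<bar> < N"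
      proof (cases "r = 0")
        case False
        hence "r * \<bar>n'\<bar> < r * K" using K(2) r(1) by (intro mult_strict_left_mono) auto
        thus ?thesis using rKN by linarith
      qed (use N in simp)
      ultimately show ?thesis by linarith
    qed
    moreover have "\<bar>r^2 * n'\<bar> = r^2 * \<bar>n'\<bar>" by (simp add: abs_mult)
    ultimately have "N + (cmod t)^2 * n' > 0" using tr abs_ge_minus_self[of "r^2*n'"] by simp
    with E show ?thesis by blast
  qed
  ultimately show ?thesis by blast
qed



lemma jacobi_lin:
  "jacobi_op d (\<lambda>m. A * x m + T * y m) = (\<lambda>m. A * jacobi_op d x m + T * jacobi_op d y m)"
  by (simp add: fun_eq_iff jacobi_op_def disc_laplacian_def sum.distrib sum_distrib_left algebra_simps)

lemma fin_supp_has_sum: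
  fixes f :: "'a \<Rightarrow> complex"
  assumes "finite F" "\<And>x. x \<notin> F \<Longrightarrow> f x = 0"
  shows "(f has_sum sum f F) UNIV"
proof -
  have "(f has_sum sum f F) F" using assms(1) by simp
  thus ?thesis by (subst has_sum_cong_neutral[where T=F and g=f]) (use assms in auto)
qed

definition dlt :: "int^'n::finite \<Rightarrow> int^'n \<Rightarrow> complex" where
  "dlt k m = (if m = k then 1 else 0)"

definition suppF :: "int^'n::finite \<Rightarrow> (int^'n) set" where
  "suppF k = insert k ((\<lambda>l. k - l) ` nbs)"

lemma finite_suppF: "finite (suppF k)"
  by (simp add: suppF_def finite_nbs)

lemma Jdlt_supp:
  fixes m k :: "int^'n::finite"
  shows "m \<notin> suppF k \<Longrightarrow> jacobi_op d (dlt k) m = 0"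
proof -
  assume m: "m \<notin> suppF k"
  have "disc_laplacian (dlt k) m = (\<Sum>l\<in>nbs. dlt k (m + l))" by (rule disc_lap_nbs)
  also have "\<dots> = 0"
  proof (rule sum.neutral, rule ballI)
    fix l :: "int^'n" assume l: "l \<in> nbs"
    have "m + l \<noteq> k"
    proof
      assume "m + l = k" hence "m = k - l" by (simp add: algebra_simps)
      with l m show False by (auto simp: suppF_def)
    qed
    thus "dlt k (m + l) = 0" by (simp add: dlt_def)
  qed
  finally show ?thesis using m by (simp add: jacobi_op_def dlt_def suppF_def)
qed

lemma Jdlt_k:
  fixes k :: "int^'n::finite"
  shows "jacobi_op d (dlt k) k = d k"
proof -
  have "disc_laplacian (dlt k) k = (\<Sum>l\<in>nbs. dlt k (k + l))" by (rule disc_lap_nbs)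
  also have "\<dots> = 0" using zero_notin_nbs by (intro sum.neutral) (auto simp: dlt_def)
  finally show ?thesis by (simp add: jacobi_op_def dlt_def)
qed

lemma uu_has_sum:
  fixes u :: "int^'n::finite \<Rightarrow> complex"
  assumes "u \<in> ell2"
  shows "((\<lambda>m. u m * cnj (u m)) has_sum of_real (\<Sum>\<^sub>\<infinity>m. (cmod (u m))^2)) UNIV"
proof -
  have "((\<lambda>m. (cmod (u m))^2) has_sum (\<Sum>\<^sub>\<infinity>m. (cmod (u m))^2)) UNIV"
    using assms by (simp add: ell2_def)
  hence "((\<lambda>m. of_real ((cmod (u m))^2) :: complex) has_sum of_real (\<Sum>\<^sub>\<infinity>m. (cmod (u m))^2)) UNIV"
    by (subst has_sum_of_real_iff)
  moreover have "(\<lambda>m. of_real ((cmod (u m))^2) :: complex) = (\<lambda>m. u m * cnj (u m))"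
    by (rule ext, rule complex_norm_square)
  ultimately show ?thesis by simp
qed

lemma single_has_sum:
  fixes f :: "int^'n::finite \<Rightarrow> complex"
  shows "((\<lambda>m. f m * dlt k m) has_sum f k) UNIV"
  using fin_supp_has_sum[of "{k}" "\<lambda>m. f m * dlt k m"] by (simp add: dlt_def)

lemma ww_has_sum:
  fixes u :: "int^'n::finite \<Rightarrow> complex"
  assumes u: "u \<in> ell2"
  shows "((\<lambda>m. (A*u m + T*dlt k m) * cnj (A*u m + T*dlt k m)) has_sum
     (A*cnj A* of_real (\<Sum>\<^sub>\<infinity>m. (cmod (u m))^2) + A*cnj T*u k + T*cnj A*cnj(u k) + T*cnj T)) UNIV"
proof -
  have h1: "((\<lambda>m. (A*cnj A) * (u m * cnj (u m))) has_sum (A*cnj A)* of_real (\<Sum>\<^sub>\<infinity>m. (cmod (u m))^2)) UNIV"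
    by (rule has_sum_cmult_right[OF uu_has_sum[OF u]])
  have h2: "((\<lambda>m. (A*cnj T) * (u m * dlt k m)) has_sum (A*cnj T) * u k) UNIV"
    by (rule has_sum_cmult_right[OF single_has_sum])
  have h3: "((\<lambda>m. (T*cnj A) * (cnj (u m) * dlt k m)) has_sum (T*cnj A) * cnj (u k)) UNIV"
    by (rule has_sum_cmult_right[OF single_has_sum])
  have h4: "((\<lambda>m. (T*cnj T) * (1 * dlt k m)) has_sum (T*cnj T) * 1) UNIV"
    by (rule has_sum_cmult_right[OF single_has_sum])
  have "((\<lambda>m. (A*cnj A) * (u m * cnj (u m)) + (A*cnj T) * (u m * dlt k m) + (T*cnj A) * (cnj (u m) * dlt k m)
        + (T*cnj T) * (1 * dlt k m)) has_sum
     ((A*cnj A)* of_real (\<Sum>\<^sub>\<infinity>m. (cmod (u m))^2) + (A*cnj T) * u k + (T*cnj A) * cnj (u k) + (T*cnj T) * 1)) UNIV"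
    by (intro has_sum_add h1 h2 h3 h4)
  moreover have "(\<lambda>m. (A*u m + T*dlt k m) * cnj (A*u m + T*dlt k m)) =
     (\<lambda>m. (A*cnj A) * (u m * cnj (u m)) + (A*cnj T) * (u m * dlt k m) + (T*cnj A) * (cnj (u m) * dlt k m)
        + (T*cnj T) * (1 * dlt k m))"
    by (rule ext) (simp add: dlt_def algebra_simps)
  ultimately show ?thesis by simp
qed

lemma Jww_has_sum:
  fixes u :: "int^'n::finite \<Rightarrow> complex"
  assumes u: "u \<in> ell2" and eig: "jacobi_op d u = (\<lambda>m. \<mu> * u m)"
  shows "((\<lambda>m. jacobi_op d (\<lambda>m. A*u m + T*dlt k m) m * cnj (A*u m + T*dlt k m)) has_sum
     (A*cnj A*\<mu>* of_real (\<Sum>\<^sub>\<infinity>m. (cmod (u m))^2) + A*\<mu>*cnj T*u k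
      + T*cnj A*(\<Sum>m\<in>suppF k. jacobi_op d (dlt k) m * cnj (u m)) + T*cnj T*d k)) UNIV"
proof -
  have h1: "((\<lambda>m. (A*cnj A*\<mu>) * (u m * cnj (u m))) has_sum (A*cnj A*\<mu>)* of_real (\<Sum>\<^sub>\<infinity>m. (cmod (u m))^2)) UNIV"
    by (rule has_sum_cmult_right[OF uu_has_sum[OF u]])
  have h2: "((\<lambda>m. (A*\<mu>*cnj T) * (u m * dlt k m)) has_sum (A*\<mu>*cnj T) * u k) UNIV"
    by (rule has_sum_cmult_right[OF single_has_sum])
  have h3: "((\<lambda>m. (T*cnj A) * (jacobi_op d (dlt k) m * cnj (u m))) has_sum
      (T*cnj A) * (\<Sum>m\<in>suppF k. jacobi_op d (dlt k) m * cnj (u m))) UNIV"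
    by (rule has_sum_cmult_right[OF fin_supp_has_sum[OF finite_suppF]]) (simp add: Jdlt_supp)
  have h4: "((\<lambda>m. (T*cnj T) * (jacobi_op d (dlt k) m * dlt k m)) has_sum (T*cnj T) * jacobi_op d (dlt k) k) UNIV"
    by (rule has_sum_cmult_right[OF single_has_sum])
  have "((\<lambda>m. (A*cnj A*\<mu>) * (u m * cnj (u m)) + (A*\<mu>*cnj T) * (u m * dlt k m)
        + (T*cnj A) * (jacobi_op d (dlt k) m * cnj (u m))
        + (T*cnj T) * (jacobi_op d (dlt k) m * dlt k m)) has_sum
     ((A*cnj A*\<mu>)* of_real (\<Sum>\<^sub>\<infinity>m. (cmod (u m))^2) + (A*\<mu>*cnj T) * u k
      + (T*cnj A) * (\<Sum>m\<in>suppF k. jacobi_op d (dlt k) m * cnj (u m)) + (T*cnj T) * jacobi_op d (dlt k) k)) UNIV"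
    by (intro has_sum_add h1 h2 h3 h4)
  moreover have "(\<lambda>m. jacobi_op d (\<lambda>m. A*u m + T*dlt k m) m * cnj (A*u m + T*dlt k m)) =
     (\<lambda>m. (A*cnj A*\<mu>) * (u m * cnj (u m)) + (A*\<mu>*cnj T) * (u m * dlt k m)
        + (T*cnj A) * (jacobi_op d (dlt k) m * cnj (u m))
        + (T*cnj T) * (jacobi_op d (dlt k) m * dlt k m))"
  proof (rule ext)
    fix m
    have "jacobi_op d (\<lambda>m. A*u m + T*dlt k m) m = A * (\<mu> * u m) + T * jacobi_op d (dlt k) m"
      using eig by (simp add: jacobi_lin fun_eq_iff)
    thus "jacobi_op d (\<lambda>m. A*u m + T*dlt k m) m * cnj (A*u m + T*dlt k m) =
      (A*cnj A*\<mu>) * (u m * cnj (u m)) + (A*\<mu>*cnj T) * (u m * dlt k m)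
        + (T*cnj A) * (jacobi_op d (dlt k) m * cnj (u m))
        + (T*cnj T) * (jacobi_op d (dlt k) m * dlt k m)"
      by (simp add: dlt_def algebra_simps)
  qed
  ultimately show ?thesis by (simp add: Jdlt_k)
qed

lemma P_eq:
  fixes u :: "int^'n::finite \<Rightarrow> complex" and k :: "int^'n"
  shows "(\<Sum>m\<in>suppF k. jacobi_op d (dlt k) m * cnj (u m)) = cnj (disc_laplacian u k) + d k * cnj (u k)"
proof -
  have kF: "k \<in> suppF k" by (simp add: suppF_def)
  have "(\<Sum>m\<in>suppF k. jacobi_op d (dlt k) m * cnj (u m)) =
     (\<Sum>m\<in>suppF k. \<Sum>l\<in>nbs. dlt k (m + l) * cnj (u m)) + (\<Sum>m\<in>suppF k. d m * dlt k m * cnj (u m))"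
    by (simp add: jacobi_op_def disc_lap_nbs sum.distrib[symmetric] sum_distrib_right distrib_right)
  also have "(\<Sum>m\<in>suppF k. d m * dlt k m * cnj (u m)) = (\<Sum>m\<in>suppF k. if m = k then d k * cnj (u k) else 0)"
    by (rule sum.cong) (auto simp: dlt_def)
  also have "\<dots> = d k * cnj (u k)" using kF by (simp add: sum.delta[OF finite_suppF])
  also have "(\<Sum>m\<in>suppF k. \<Sum>l\<in>nbs. dlt k (m + l) * cnj (u m)) = (\<Sum>l\<in>nbs. \<Sum>m\<in>suppF k. dlt k (m + l) * cnj (u m))"
    by (rule sum.swap)
  also have "\<dots> = (\<Sum>l\<in>nbs. cnj (u (k - l)))"
  proof (rule sum.cong)
    fix l :: "int^'n" assume l: "l \<in> nbs"
    have kl: "k - l \<in> suppF k" using l by (auto simp: suppF_def)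
    have "(\<Sum>m\<in>suppF k. dlt k (m + l) * cnj (u m)) = (\<Sum>m\<in>suppF k. if m = k - l then cnj (u (k - l)) else 0)"
      by (rule sum.cong) (auto simp: dlt_def algebra_simps)
    also have "\<dots> = cnj (u (k - l))" using kl by (simp add: sum.delta[OF finite_suppF])
    finally show "(\<Sum>m\<in>suppF k. dlt k (m + l) * cnj (u m)) = cnj (u (k - l))" .
  qed simp
  also have "\<dots> = (\<Sum>l\<in>nbs. cnj (u (k + l)))"
    by (rule sum.reindex_bij_witness[where i=uminus and j=uminus]) (auto simp: nbs_uminus)
  also have "\<dots> = cnj (disc_laplacian u k)" by (simp add: disc_lap_nbs)
  finally show ?thesis .
qed



lemma ident1:
  fixes t uk :: complex and N :: real
  assumes N: "N \<noteq> 0"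
  defines "a \<equiv> 1 - t * cnj uk / of_real N"
  shows "a * cnj a * of_real N + a * cnj t * uk + t * cnj a * cnj uk + t * cnj t
       = of_real (N + (cmod t)^2 * (1 - (cmod uk)^2 / N))"
proof -
  have "of_real (N + (cmod t)^2 * (1 - (cmod uk)^2 / N)) = of_real N + (t * cnj t) * (1 - (uk * cnj uk) / of_real N)"
    by (simp add: complex_norm_square[symmetric])
  moreover have "a * cnj a * of_real N + a * cnj t * uk + t * cnj a * cnj uk + t * cnj t
     = of_real N + (t * cnj t) * (1 - (uk * cnj uk) / of_real N)"
    using N by (simp add: a_def field_simps)
  ultimately show ?thesis by simp
qed

lemma ident2:
  fixes t uk \<mu> P dk z :: complex and N Q :: real
  assumes N: "N \<noteq> 0"
  defines "a \<equiv> 1 - t * cnj uk / of_real N"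
  assumes E: "t * (P - \<mu> * cnj uk) + of_real ((cmod t)^2) * (dk - \<mu> - uk * (P - \<mu> * cnj uk) / of_real N) = z * of_real Q"
    and W: "a * cnj a * of_real N + a * cnj t * uk + t * cnj a * cnj uk + t * cnj t = of_real Q"
  shows "a * cnj a * \<mu> * of_real N + a * \<mu> * cnj t * uk + t * cnj a * P + t * cnj t * dk
       = (\<mu> + z) * of_real Q"
proof -
  have E': "t * (P - \<mu> * cnj uk) + (t * cnj t) * (dk - \<mu> - uk * (P - \<mu> * cnj uk) / of_real N) = z * of_real Q"
    using E by (simp add: complex_norm_square[symmetric])
  have "a * cnj a * \<mu> * of_real N + a * \<mu> * cnj t * uk + t * cnj a * P + t * cnj t * dk
      = \<mu> * (a * cnj a * of_real N + a * cnj t * uk + t * cnj a * cnj uk + t * cnj t)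
        + (t * (P - \<mu> * cnj uk) + (t * cnj t) * (dk - \<mu> - uk * (P - \<mu> * cnj uk) / of_real N))"
    using N by (simp add: a_def field_simps)
  also have "\<dots> = (\<mu> + z) * of_real Q" using E' W by (simp add: algebra_simps)
  finally show ?thesis .
qed



lemma interior_lemma:
  fixes u :: "int^'n::finite \<Rightarrow> complex"
  assumes u: "u \<in> ell2" and eig: "jacobi_op d u = (\<lambda>m. \<mu> * u m)"
    and uk: "u k \<noteq> 0" and Imk: "Im (d k) \<noteq> Im \<mu>"
  shows "\<mu> \<in> interior (num_range (jacobi_op d))"
proof -
  define N where "N = (\<Sum>\<^sub>\<infinity>m. (cmod (u m))^2)"
  have sumu: "(\<lambda>m. (cmod (u m))^2) summable_on UNIV" using u by (simp add: ell2_def)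
  have "(\<Sum>m\<in>{k}. (cmod (u m))^2) \<le> N" unfolding N_def
    by (rule finite_sum_le_infsum[OF sumu]) auto
  hence "(cmod (u k))^2 \<le> N" by simp
  moreover have "(cmod (u k))^2 > 0" using uk by simp
  ultimately have N: "N > 0" by linarith
  define P where "P = (\<Sum>m\<in>suppF k. jacobi_op d (dlt k) m * cnj (u m))"
  define c where "c = P - \<mu> * cnj (u k)"
  have ek: "disc_laplacian u k + d k * u k = \<mu> * u k"
    using eig by (simp add: fun_eq_iff jacobi_op_def)
  have c_eq: "c = (cnj \<mu> - cnj (d k) + d k - \<mu>) * cnj (u k)"
  proof -
    have "cnj (disc_laplacian u k + d k * u k) = cnj (\<mu> * u k)" using ek by simp
    hence "cnj (disc_laplacian u k) = cnj \<mu> * cnj (u k) - cnj (d k) * cnj (u k)"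
      by (simp add: algebra_simps)
    moreover have "P = cnj (disc_laplacian u k) + d k * cnj (u k)" unfolding P_def by (rule P_eq)
    ultimately show ?thesis by (simp add: c_def algebra_simps)
  qed
  have "Im (cnj \<mu> - cnj (d k) + d k - \<mu>) = 2 * (Im (d k) - Im \<mu>)" by simp
  hence "cnj \<mu> - cnj (d k) + d k - \<mu> \<noteq> 0" using Imk by (metis mult_eq_0_iff right_minus_eq zero_complex.sel(2) zero_neq_numeral)
  hence c0: "c \<noteq> 0" using uk c_eq by simp
  define n' where "n' = 1 - (cmod (u k))^2 / N"
  define e where "e = d k - \<mu> - u k * c / of_real N"
  obtain \<epsilon> where \<epsilon>: "\<epsilon> > 0" and sol: "\<And>z. cmod z < \<epsilon> \<Longrightarrow> (\<exists>t. t * c + of_real ((cmod t)^2) * e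
            = z * of_real (N + (cmod t)^2 * n') \<and> N + (cmod t)^2 * n' > 0)"
    using scalar_solve[OF N c0, of e n'] by blast
  have "ball \<mu> \<epsilon> \<subseteq> num_range (jacobi_op d)"
  proof
    fix y assume y: "y \<in> ball \<mu> \<epsilon>"
    define z where "z = y - \<mu>"
    have "cmod z < \<epsilon>" using y by (simp add: z_def dist_norm norm_minus_commute)
    then obtain t where E: "t * c + of_real ((cmod t)^2) * e = z * of_real (N + (cmod t)^2 * n')"
      and Qpos: "N + (cmod t)^2 * n' > 0" using sol by blast
    define Q where "Q = N + (cmod t)^2 * n'"
    define a where "a = 1 - t * cnj (u k) / of_real N"
    define s where "s = sqrt Q"
    have s0: "s > 0" using Qpos by (simp add: s_def Q_def)
    have s2: "(of_real s :: complex)^2 = of_real Q" using Qpos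
      by (simp add: s_def Q_def flip: of_real_power)
    have "Q \<noteq> 0" using Qpos by (simp add: Q_def)
    hence Qne: "(of_real Q :: complex) \<noteq> 0" by (simp only: of_real_eq_0_iff not_False_eq_True)
    define A where "A = a / of_real s"
    define T where "T = t / of_real s"
    define w where "w = (\<lambda>m. A * u m + T * dlt k m)"
    have W1: "a * cnj a * of_real N + a * cnj t * u k + t * cnj a * cnj (u k) + t * cnj t = of_real Q"
      unfolding a_def Q_def n'_def using ident1[where N=N and t=t and uk="u k"] N by simp
    have J1: "a * cnj a * \<mu> * of_real N + a * \<mu> * cnj t * u k + t * cnj a * P + t * cnj t * d k
       = (\<mu> + z) * of_real Q"
      unfolding a_def by (rule ident2[where N=N and t=t and uk="u k" and P=P and \<mu>=\<mu> and dk="d k" and z=z and Q=Q])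
        (use N E W1 in \<open>simp_all add: a_def Q_def c_def e_def\<close>)
    have Sww: "A*cnj A * of_real N + A*cnj T*u k + T*cnj A*cnj(u k) + T*cnj T = 1"
    proof -
      have "A*cnj A * of_real N + A*cnj T*u k + T*cnj A*cnj(u k) + T*cnj T
          = (a * cnj a * of_real N + a * cnj t * u k + t * cnj a * cnj (u k) + t * cnj t) / (of_real s)^2"
        using s0 by (simp add: A_def T_def field_simps power2_eq_square)
      also have "\<dots> = 1" using W1 s2 Qne by simp
      finally show ?thesis .
    qed
    have SJ: "A*cnj A*\<mu> * of_real N + A*\<mu>*cnj T*u k + T*cnj A*P + T*cnj T*d k = y"
    proof -
      have "A*cnj A*\<mu> * of_real N + A*\<mu>*cnj T*u k + T*cnj A*P + T*cnj T*d k
          = (a * cnj a * \<mu> * of_real N + a * \<mu> * cnj t * u k + t * cnj a * P + t * cnj t * d k) / (of_real s)^2"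
        using s0 by (simp add: A_def T_def field_simps power2_eq_square)
      also have "\<dots> = y" using J1 s2 Qne by (simp add: z_def)
      finally show ?thesis .
    qed
    have hw: "((\<lambda>m. w m * cnj (w m)) has_sum 1) UNIV"
      using ww_has_sum[OF u, of A T k] Sww unfolding w_def N_def by simp
    have "((\<lambda>m. Re (w m * cnj (w m))) has_sum Re 1) UNIV" by (rule has_sum_Re[OF hw])
    moreover have "(\<lambda>m. Re (w m * cnj (w m))) = (\<lambda>m. (cmod (w m))^2)"
      by (rule ext) (simp flip: complex_norm_square)
    ultimately have hn: "((\<lambda>m. (cmod (w m))^2) has_sum 1) UNIV" by simp
    have wl2: "w \<in> ell2" using hn by (auto simp: ell2_def summable_on_def)
    have wn: "l2norm w = 1" using hn by (simp add: l2norm_def infsumI)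
    have hJ: "((\<lambda>m. jacobi_op d w m * cnj (w m)) has_sum y) UNIV"
      using Jww_has_sum[OF u eig, of A T k] SJ unfolding w_def N_def P_def by simp
    have "l2inner (jacobi_op d w) w = y" using hJ by (simp add: l2inner_def infsumI)
    thus "y \<in> num_range (jacobi_op d)" using wl2 wn unfolding num_range_def by blast
  qed
  thus ?thesis using \<epsilon> mem_interior by blast
qed



theorem mainTheorem5:
  fixes d :: "int^'n::finite \<Rightarrow> complex" and b :: real
  assumes "bounded (range d)"
    and "\<exists>j. bdd_above {k $ j | k. Im (d k) = b} \<or> bdd_below {k $ j | k. Im (d k) = b}"
  shows "\<not> (\<exists>\<mu>. Im \<mu> = b \<and> boundary_eigenvalue (jacobi_op d) \<mu>)"
proof
  assume "\<exists>\<mu>. Im \<mu> = b \<and> boundary_eigenvalue (jacobi_op d) \<mu>"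
  then obtain \<mu> where Im\<mu>: "Im \<mu> = b" and be: "boundary_eigenvalue (jacobi_op d) \<mu>" by blast
  from be obtain u where u: "u \<in> ell2" and nz: "\<exists>k. u k \<noteq> 0" and eig: "jacobi_op d u = (\<lambda>k. \<mu> * u k)"
    by (auto simp: boundary_eigenvalue_def is_eigenvalue_def)
  have ni: "\<mu> \<notin> interior (num_range (jacobi_op d))"
    using be by (simp add: boundary_eigenvalue_def frontier_def)
  have supp: "Im (d k) = b" if "u k \<noteq> 0" for k
    using interior_lemma[OF u eig that] ni Im\<mu> by blast
  from assms(2) have "u = (\<lambda>_. 0)"
  proof (elim exE disjE)
    fix j assume "bdd_above {k $ j | k. Im (d k) = b}"
    then obtain M where M: "\<And>x. x \<in> {k $ j | k. Im (d k) = b} \<Longrightarrow> x \<le> M" by (auto simp: bdd_above_def)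
    show ?thesis
      by (rule support_zero[OF eig, of 1 j M]) (use M supp in auto)
  next
    fix j assume "bdd_below {k $ j | k. Im (d k) = b}"
    then obtain M where M: "\<And>x. x \<in> {k $ j | k. Im (d k) = b} \<Longrightarrow> M \<le> x" by (auto simp: bdd_below_def)
    show ?thesis
    proof (rule support_zero[OF eig, of "-1" j "-M"])
      show "\<forall>k. u k \<noteq> 0 \<longrightarrow> - 1 * k $ j \<le> - M"
        using M supp by fastforce
    qed simp
  qed
  with nz show False by simp
qed


end
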